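(* Let $G\curvearrowright X$ and $H\curvearrowright Y$ be group actions with $\mathrm{Con}(H\curvearrowright Y)\subseteq\mathrm{Con}(G\curvearrowright X)$. Then $\tau(G\curvearrowright X)\le\tau(H\curvearrowright Y)$.
   Context: For an action $G\curvearrowright X$, an ordered tuple $\mathfrak{g}=(g_1,\dots,g_n)$ of elements of $G$ and a finite partition $\mathcal{E}=\{E_1,\dots,E_m\}$ of $X$ (a configuration pair), a configuration is a tuple $C=(C_0,\dots,C_n)\in\{1,\dots,m\}^{n+1}$ such that some $x\in E_{C_0}$ satisfies $g_i\cdot x\in E_{C_i}$ for $i=1,\dots,n$; the set of these is $\mathrm{Con}(\mathfrak{g},\mathcal{E};X)$, and $\mathrm{Con}(G\curvearrowright X)=\{\mathrm{Con}(\mathfrak{g},\mathcal{E};X): (\mathfrak{g},\mathcal{E})\text{ a configuration pair}\}$. A paradoxical decomposition of $G\curvearrowright X$ consists of pairwise disjoint subsets $A_1,\dots,A_n,B_1,\dots,B_m$ of $X$ and elements $g_1,\dots,g_n,h_1,\dots,h_m\in G$ with $X=\bigcup_{i=1}^n g_iA_i=\bigcup_{j=1}^m h_jB_j$. The Tarski number $\tau(G\curvearrowright X)$ is the minimal number of pieces $n+m$ in such a decomposition, and $\infty$ if none exists. *)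

theory Defs
  imports "HOL-Algebra.Group_Action" "HOL-Library.Extended_Nat"
begin

definition is_partition_list :: "'b set list \<Rightarrow> 'b set \<Rightarrow> bool" where
  "is_partition_list Es X \<longleftrightarrow>
     (\<forall>i < length Es. Es ! i \<noteq> {} \<and> Es ! i \<subseteq> X) \<and>
     (\<forall>i < length Es. \<forall>j < length Es. i \<noteq> j \<longrightarrow> Es ! i \<inter> Es ! j = {}) \<and>
     (\<Union>i < length Es. Es ! i) = X"

definition config_pair :: "('a, 'c) monoid_scheme \<Rightarrow> 'b set \<Rightarrow> 'a list \<Rightarrow> 'b set list \<Rightarrow> bool" where
  "config_pair G X gs Es \<longleftrightarrow> gs \<noteq> [] \<and> set gs \<subseteq> carrier G \<and> is_partition_list Es X"

definition Con :: "('a \<Rightarrow> 'b \<Rightarrow> 'b) \<Rightarrow> 'a list \<Rightarrow> 'b set list \<Rightarrow> nat list set" where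
  "Con \<phi> gs Es = {C. length C = Suc (length gs) \<and> (\<forall>i < length C. C ! i < length Es) \<and>
      (\<exists>x \<in> Es ! (C ! 0). \<forall>i < length gs. \<phi> (gs ! i) x \<in> Es ! (C ! Suc i))}"

definition Con_action :: "('a, 'c) monoid_scheme \<Rightarrow> 'b set \<Rightarrow> ('a \<Rightarrow> 'b \<Rightarrow> 'b) \<Rightarrow> nat list set set" where
  "Con_action G X \<phi> = {Con \<phi> gs Es | gs Es. config_pair G X gs Es}"

definition paradoxical_decomposition ::
  "('a, 'c) monoid_scheme \<Rightarrow> 'b set \<Rightarrow> ('a \<Rightarrow> 'b \<Rightarrow> 'b) \<Rightarrow>
   'b set list \<Rightarrow> 'a list \<Rightarrow> 'b set list \<Rightarrow> 'a list \<Rightarrow> bool" where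
  "paradoxical_decomposition G X \<phi> As gs Bs hs \<longleftrightarrow>
     length gs = length As \<and> length hs = length Bs \<and>
     set gs \<subseteq> carrier G \<and> set hs \<subseteq> carrier G \<and>
     (\<forall>S \<in> set (As @ Bs). S \<subseteq> X) \<and>
     (\<forall>i < length (As @ Bs). \<forall>j < length (As @ Bs). i \<noteq> j \<longrightarrow> (As @ Bs) ! i \<inter> (As @ Bs) ! j = {}) \<and>
     X = (\<Union>i < length As. \<phi> (gs ! i) ` (As ! i)) \<and>
     X = (\<Union>j < length Bs. \<phi> (hs ! j) ` (Bs ! j))"

definition tarski_number :: "('a, 'c) monoid_scheme \<Rightarrow> 'b set \<Rightarrow> ('a \<Rightarrow> 'b \<Rightarrow> 'b) \<Rightarrow> enat" where
  "tarski_number G X \<phi> = Inf {enat (length As + length Bs) | As gs Bs hs.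
      paradoxical_decomposition G X \<phi> As gs Bs hs}"

end

theory Submission imports Defs begin

lemma fiber_partition:
  assumes "finite (\<tau> ` Y)"
  shows "\<exists>Es. is_partition_list Es Y \<and> (\<forall>c<length Es. \<exists>S. Es!c = {y\<in>Y. \<tau> y = S})"
proof -
  obtain l where l: "distinct l" "set l = \<tau> ` Y" using finite_distinct_list[OF assms] by metis
  define Es where "Es = map (\<lambda>S. {y\<in>Y. \<tau> y = S}) l"
  have "is_partition_list Es Y"
    unfolding is_partition_list_def
  proof (intro conjI allI impI)
    fix i assume "i < length Es"
    then have "l!i \<in> \<tau> ` Y" using l by (metis Es_def length_map nth_mem)
    then show "Es ! i \<noteq> {}" using \<open>i < length Es\<close> by (auto simp: Es_def)
    show "Es ! i \<subseteq> Y" using \<open>i < length Es\<close> by (auto simp: Es_def)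
  next
    fix i j assume "i < length Es" "j < length Es" "i \<noteq> j"
    then have "l!i \<noteq> l!j" using l(1) by (simp add: Es_def nth_eq_iff_index_eq)
    then show "Es ! i \<inter> Es ! j = {}" using \<open>i < length Es\<close> \<open>j < length Es\<close> by (auto simp: Es_def)
  next
    show "(\<Union>i<length Es. Es ! i) = Y"
    proof
      show "(\<Union>i<length Es. Es ! i) \<subseteq> Y" by (auto simp: Es_def)
      show "Y \<subseteq> (\<Union>i<length Es. Es ! i)"
      proof
        fix y assume "y \<in> Y"
        then have "\<tau> y \<in> set l" using l by auto
        then obtain i where "i < length l" "l!i = \<tau> y" by (metis in_set_conv_nth)
        then show "y \<in> (\<Union>i<length Es. Es ! i)" using \<open>y \<in> Y\<close> by (auto simp: Es_def intro!: bexI[of _ i])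
      qed
    qed
  qed
  moreover have "\<forall>c<length Es. \<exists>S. Es!c = {y\<in>Y. \<tau> y = S}" by (auto simp: Es_def)
  ultimately show ?thesis by blast
qed

lemma partition_label:
  assumes "is_partition_list F X" "z \<in> X"
  shows "\<exists>!c. c < length F \<and> z \<in> F!c"
proof -
  from assms obtain c where "c < length F" "z \<in> F!c" unfolding is_partition_list_def by blast
  moreover have "\<And>d. d < length F \<Longrightarrow> z \<in> F!d \<Longrightarrow> d = c"
    using assms(1) calculation unfolding is_partition_list_def by blast
  ultimately show ?thesis by blast
qed

lemma transfer:
  assumes gaG: "group_action G X \<phi>" and gaH: "group_action H Y \<psi>"
    and sub: "Con_action H Y \<psi> \<subseteq> Con_action G X \<phi>"
    and pd: "paradoxical_decomposition H Y \<psi> As gs Bs hs"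
  shows "\<exists>As' gs' Bs' hs'. paradoxical_decomposition G X \<phi> As' gs' Bs' hs' \<and>
           length As' = length As \<and> length Bs' = length Bs"
proof -
  have grpG: "group G" using gaG group_action_def group_hom.axioms(1) by blast
  have grpH: "group H" using gaH group_action_def group_hom.axioms(1) by blast
  define n where "n = length As"
  define N where "N = n + length Bs"
  define P where "P = As @ Bs"
  define T where "T = gs @ hs"
  have lenP: "length P = N" and lenT: "length T = N"
    using pd by (auto simp: P_def T_def N_def n_def paradoxical_decomposition_def)
  have Tc: "\<And>i. i < N \<Longrightarrow> T!i \<in> carrier H"
    using pd lenT unfolding paradoxical_decomposition_def T_def
    by (metis (no_types, lifting) Un_subset_iff nth_mem set_append subsetD)
  have PY: "\<And>i. i < N \<Longrightarrow> P!i \<subseteq> Y"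
    using pd lenP unfolding paradoxical_decomposition_def P_def by (metis nth_mem)
  have Pdisj: "\<And>i j. i < N \<Longrightarrow> j < N \<Longrightarrow> i \<noteq> j \<Longrightarrow> P!i \<inter> P!j = {}"
    using pd lenP unfolding paradoxical_decomposition_def P_def by metis
  have lgs: "length gs = length As" and lhs: "length hs = length Bs"
    and covA: "Y = (\<Union>i<length As. \<psi> (gs ! i) ` (As ! i))"
    and covB: "Y = (\<Union>j<length Bs. \<psi> (hs ! j) ` (Bs ! j))"
    using pd unfolding paradoxical_decomposition_def by blast+
  define \<tau> where "\<tau> y = {k. k < N \<and> y \<in> P!k}" for y
  have finY: "finite (\<tau> ` Y)"
    by (rule finite_subset[of _ "Pow {..<N}"]) (auto simp: \<tau>_def)
  obtain E where E: "is_partition_list E Y" and fib: "\<forall>c<length E. \<exists>S. E!c = {y\<in>Y. \<tau> y = S}"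
    using fiber_partition[OF finY] by blast
  define gsH where "gsH = map (\<lambda>g. inv\<^bsub>H\<^esub> g) T @ [\<one>\<^bsub>H\<^esub>]"
  have "config_pair H Y gsH E"
    unfolding config_pair_def gsH_def using E Tc lenT grpH
    by (auto simp: in_set_conv_nth group.inv_closed group.is_monoid monoid.one_closed)
  then have "Con \<psi> gsH E \<in> Con_action G X \<phi>" using sub unfolding Con_action_def by blast
  then obtain ks F where cpG: "config_pair G X ks F" and ConEq: "Con \<phi> ks F = Con \<psi> gsH E"
    unfolding Con_action_def by blast
  have F: "is_partition_list F X" and ksc: "set ks \<subseteq> carrier G" using cpG unfolding config_pair_def by auto
  define k where "k i = (if i < length ks then ks!i else \<one>\<^bsub>G\<^esub>)" for i
  have kc: "k i \<in> carrier G" for i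
    using ksc grpG by (auto simp: k_def group.is_monoid monoid.one_closed)
  define A' where "A' i = {x\<in>X. \<exists>c<length F. c < length E \<and> x \<in> F!c \<and> E!c \<subseteq> P!i}" for i
  have A'X: "A' i \<subseteq> X" for i by (auto simp: A'_def)
  have A'disj: "A' i \<inter> A' j = {}" if "i < N" "j < N" "i \<noteq> j" for i j
  proof (rule ccontr)
    assume "A' i \<inter> A' j \<noteq> {}"
    then obtain x c d where "x \<in> X" "c < length F" "c < length E" "x \<in> F!c" "E!c \<subseteq> P!i"
      "d < length F" "d < length E" "x \<in> F!d" "E!d \<subseteq> P!j" by (auto simp: A'_def)
    moreover have "c = d" using partition_label[OF F \<open>x \<in> X\<close>] calculation by blast
    moreover have "E!c \<noteq> {}" using E calculation unfolding is_partition_list_def by blast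
    ultimately show False using Pdisj[OF that] by blast
  qed
  have cover: "\<exists>i<N. Q i \<and> x \<in> \<phi> (inv\<^bsub>G\<^esub> (k i)) ` A' i"
    if xX: "x \<in> X" and Ycov: "\<forall>y\<in>Y. \<exists>i<N. Q i \<and> y \<in> \<psi> (T!i) ` (P!i)" for x Q
  proof -
    define lab where "lab z = (THE c. c < length F \<and> z \<in> F!c)" for z
    have lab: "lab z < length F \<and> z \<in> F!(lab z)" if "z \<in> X" for z
      unfolding lab_def using theI'[OF partition_label[OF F that]] .
    have imX: "\<phi> (ks!i) x \<in> X" if "i < length ks" for i
      using group_action.element_image[OF gaG _ xX] ksc that nth_mem by blast
    define C where "C = lab x # map (\<lambda>i. lab (\<phi> (ks!i) x)) [0..<length ks]"
    have "C \<in> Con \<phi> ks F"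
      unfolding Con_def
    proof (intro CollectI conjI allI impI)
      show "length C = Suc (length ks)" by (simp add: C_def)
      fix i assume "i < length C"
      then show "C!i < length F" using lab xX imX
        by (cases i) (auto simp: C_def)
    next
      show "\<exists>xa\<in>F ! (C ! 0). \<forall>i<length ks. \<phi> (ks ! i) xa \<in> F ! (C ! Suc i)"
        using lab xX imX by (auto simp: C_def intro!: bexI[of _ x])
    qed
    then have "C \<in> Con \<psi> gsH E" using ConEq by simp
    then obtain y where lenC: "length C = Suc (length gsH)" and CE: "\<forall>i<length C. C!i < length E"
      and y: "y \<in> E!(C!0)" and yi: "\<forall>i<length gsH. \<psi> (gsH!i) y \<in> E!(C!Suc i)"
      unfolding Con_def by blast
    have lenks: "length ks = Suc N" using lenC lenT by (simp add: C_def gsH_def)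
    have "C!0 < length E" using CE lenC by simp
    then have "y \<in> Y" using y E unfolding is_partition_list_def by blast
    then obtain i a where i: "i < N" "Q i" and a: "a \<in> P!i" and ya: "y = \<psi> (T!i) a" using Ycov by blast
    have aY: "a \<in> Y" using PY[OF i(1)] a by blast
    have "\<psi> (inv\<^bsub>H\<^esub> (T!i)) y = a"
      using group_action.orbit_sym_aux[OF gaH Tc[OF i(1)] aY ya[symmetric]] .
    moreover have "gsH!i = inv\<^bsub>H\<^esub> (T!i)" using i lenT by (simp add: gsH_def nth_append)
    moreover have "i < length gsH" using i lenT by (simp add: gsH_def)
    ultimately have aE: "a \<in> E!(C!Suc i)" using yi by metis
    have ci: "C!Suc i < length E" using CE lenC i lenT by (simp add: gsH_def)
    then obtain S where S: "E!(C!Suc i) = {y\<in>Y. \<tau> y = S}" using fib by blast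
    have "i \<in> S" using aE S a i by (auto simp: \<tau>_def)
    then have EP: "E!(C!Suc i) \<subseteq> P!i" using S by (auto simp: \<tau>_def)
    have iks: "i < length ks" using lenks i by simp
    have CSi: "C!Suc i = lab (\<phi> (ks!i) x)" using iks by (simp add: C_def)
    have zA: "\<phi> (ks!i) x \<in> A' i"
      using lab[OF imX[OF iks]] imX[OF iks] ci EP CSi by (auto simp: A'_def)
    have "\<phi> (inv\<^bsub>G\<^esub> (ks!i)) (\<phi> (ks!i) x) = x"
      using group_action.orbit_sym_aux[OF gaG _ xX refl] ksc iks nth_mem by blast
    moreover have "k i = ks!i" using iks by (simp add: k_def)
    ultimately have "x \<in> \<phi> (inv\<^bsub>G\<^esub> (k i)) ` A' i" using zA by (metis image_eqI)
    then show ?thesis using i by blast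
  qed
  define P' where "P' = map A' [0..<N]"
  define T' where "T' = map (\<lambda>i. inv\<^bsub>G\<^esub> (k i)) [0..<N]"
  define As' where "As' = take n P'"
  define Bs' where "Bs' = drop n P'"
  define gs' where "gs' = take n T'"
  define hs' where "hs' = drop n T'"
  have nN: "n \<le> N" by (simp add: N_def)
  have AB: "As' @ Bs' = P'" by (simp add: As'_def Bs'_def)
  have T'c: "set T' \<subseteq> carrier G" using kc grpG by (auto simp: T'_def group.inv_closed)
  have imXG: "\<phi> (inv\<^bsub>G\<^esub> (k i)) ` A' i \<subseteq> X" for i
  proof
    fix z assume "z \<in> \<phi> (inv\<^bsub>G\<^esub> (k i)) ` A' i"
    then obtain w where w: "w \<in> A' i" "z = \<phi> (inv\<^bsub>G\<^esub> (k i)) w" by blast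
    have "inv\<^bsub>G\<^esub> (k i) \<in> carrier G" using kc grpG by (simp add: group.inv_closed)
    then show "z \<in> X" using group_action.element_image[OF gaG _ _ w(2)[symmetric]] w(1) A'X by blast
  qed
  have "paradoxical_decomposition G X \<phi> As' gs' Bs' hs'"
    unfolding paradoxical_decomposition_def
  proof (intro conjI)
    show "length gs' = length As'" "length hs' = length Bs'"
      by (simp_all add: gs'_def As'_def hs'_def Bs'_def P'_def T'_def)
    show "set gs' \<subseteq> carrier G"
      unfolding gs'_def using T'c by (meson order_trans set_take_subset)
    show "set hs' \<subseteq> carrier G"
      unfolding hs'_def using T'c by (meson order_trans set_drop_subset)
    show "\<forall>S\<in>set (As' @ Bs'). S \<subseteq> X" using A'X by (auto simp: AB P'_def)
    show "\<forall>i<length (As' @ Bs'). \<forall>j<length (As' @ Bs'). i \<noteq> j \<longrightarrow> (As' @ Bs') ! i \<inter> (As' @ Bs') ! j = {}"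
      using A'disj by (simp add: AB P'_def)
    show "X = (\<Union>i<length As'. \<phi> (gs' ! i) ` (As' ! i))"
    proof
      have "\<phi> (gs' ! i) ` (As' ! i) \<subseteq> X" if "i < length As'" for i
        using that nN imXG[of i] by (simp add: gs'_def As'_def P'_def T'_def)
      then show "(\<Union>i<length As'. \<phi> (gs' ! i) ` (As' ! i)) \<subseteq> X" by blast
      show "X \<subseteq> (\<Union>i<length As'. \<phi> (gs' ! i) ` (As' ! i))"
      proof
        fix x assume "x \<in> X"
        have "\<forall>y\<in>Y. \<exists>i<N. i < n \<and> y \<in> \<psi> (T!i) ` (P!i)"
        proof
          fix y assume "y \<in> Y"
          then obtain i where i: "i < length As" "y \<in> \<psi> (gs ! i) ` (As ! i)"
            using covA by blast
          have "T!(i) = gs!i" "P!(i) = As!i"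
            using i(1) lgs lhs by (simp_all add: T_def P_def n_def nth_append)
          moreover have "i < N" using i(1) by (auto simp: N_def n_def)
          ultimately show "\<exists>i<N. i < n \<and> y \<in> \<psi> (T!i) ` (P!i)"
            using i by (intro exI[of _ "i"]) (simp add: n_def)
        qed
        then obtain i where "i < N" "i < n" "x \<in> \<phi> (inv\<^bsub>G\<^esub> (k i)) ` A' i"
          using cover[OF \<open>x \<in> X\<close>, of "\<lambda>i. i < n"] by blast
        then show "x \<in> (\<Union>i<length As'. \<phi> (gs' ! i) ` (As' ! i))"
          using nN by (auto simp: gs'_def As'_def P'_def T'_def intro!: bexI[of _ i])
      qed
    qed
    show "X = (\<Union>i<length Bs'. \<phi> (hs' ! i) ` (Bs' ! i))"
    proof
      have "\<phi> (hs' ! i) ` (Bs' ! i) \<subseteq> X" if "i < length Bs'" for i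
      proof -
        have "n + i < N" using that nN by (simp add: Bs'_def P'_def)
        then show ?thesis using that nN imXG[of "n+i"] by (simp add: hs'_def Bs'_def P'_def T'_def)
      qed
      then show "(\<Union>i<length Bs'. \<phi> (hs' ! i) ` (Bs' ! i)) \<subseteq> X" by blast
      show "X \<subseteq> (\<Union>i<length Bs'. \<phi> (hs' ! i) ` (Bs' ! i))"
      proof
        fix x assume "x \<in> X"
        have "\<forall>y\<in>Y. \<exists>i<N. n \<le> i \<and> y \<in> \<psi> (T!i) ` (P!i)"
        proof
          fix y assume "y \<in> Y"
          then obtain i where i: "i < length Bs" "y \<in> \<psi> (hs ! i) ` (Bs ! i)"
            using covB by blast
          have "T!(n+i) = hs!i" "P!(n+i) = Bs!i"
            using i(1) lgs lhs by (simp_all add: T_def P_def n_def nth_append)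
          moreover have "n+i < N" using i(1) by (auto simp: N_def n_def)
          ultimately show "\<exists>i<N. n \<le> i \<and> y \<in> \<psi> (T!i) ` (P!i)"
            using i by (intro exI[of _ "n+i"]) (simp add: n_def)
        qed
        then obtain i where "i < N" "n \<le> i" "x \<in> \<phi> (inv\<^bsub>G\<^esub> (k i)) ` A' i"
          using cover[OF \<open>x \<in> X\<close>, of "\<lambda>i. n \<le> i"] by blast
        then show "x \<in> (\<Union>i<length Bs'. \<phi> (hs' ! i) ` (Bs' ! i))"
          using nN by (auto simp: hs'_def Bs'_def P'_def T'_def intro!: bexI[of _ "i - n"])
      qed
    qed
  qed
  moreover have "length As' = length As" "length Bs' = length Bs"
    by (simp_all add: As'_def Bs'_def P'_def N_def n_def)
  ultimately show ?thesis by blast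
qed

theorem mainTheorem6:
  fixes G :: "('a, 'c) monoid_scheme" and X :: "'b set" and \<phi> :: "'a \<Rightarrow> 'b \<Rightarrow> 'b"
    and H :: "('d, 'e) monoid_scheme" and Y :: "'f set" and \<psi> :: "'d \<Rightarrow> 'f \<Rightarrow> 'f"
  assumes "group_action G X \<phi>" and "group_action H Y \<psi>"
    and "Con_action H Y \<psi> \<subseteq> Con_action G X \<phi>"
  shows "tarski_number G X \<phi> \<le> tarski_number H Y \<psi>"
  unfolding tarski_number_def
proof (rule Inf_mono)
  fix b assume "b \<in> {enat (length As + length Bs) | As gs Bs hs.
      paradoxical_decomposition H Y \<psi> As gs Bs hs}"
  then obtain As gs Bs hs where b: "b = enat (length As + length Bs)"
    and pd: "paradoxical_decomposition H Y \<psi> As gs Bs hs" by blast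
  obtain As' gs' Bs' hs' where "paradoxical_decomposition G X \<phi> As' gs' Bs' hs'"
    "length As' = length As" "length Bs' = length Bs"
    using transfer[OF assms pd] by blast
  then show "\<exists>a\<in>{enat (length As + length Bs) | As gs Bs hs.
      paradoxical_decomposition G X \<phi> As gs Bs hs}. a \<le> b"
    using b by fastforce
qed

end
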